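(* Let $x_1,\dots,x_n\in\mathbb{R}^2$ satisfy $x_i\prec x_j$ whenever $i<j$, let $p\ge3$, $k\in\{3,\dots,p\}$ and $i\in\{k,\dots,n\}$. Suppose the values $C^{MM}_{k-1,j}$ for $j\in\{k-1,\dots,i-1\}$ are available (stored in an array with $O(1)$ access). Then $C^{MM}_{k,i}=\max_{j\in\{k-1,\dots,i-1\}}\min(C^{MM}_{k-1,j},d_{j,i})$ can be computed in $O(\log(i+1-k))$ time (by a dichotomic search on $j$).
   Context: For $y=(y^1,y^2),z=(z^1,z^2)\in\mathbb{R}^2$ write $y\prec z$ iff $y^1<z^1$ and $y^2>z^2$. Fix $\alpha>0$, let $d$ be the Euclidean distance, and set $d_{ij}=d(x_i,x_j)^\alpha$. For $k\ge2$ and $i\ge k$, $C^{MM}_{k,i}$ denotes the optimal value of the Max-Min $k$-dispersion problem among $x_1,\dots,x_i$: $C^{MM}_{k,i}=\max_{1\le i_1<\dots<i_k\le i}\min_{1\le a<b\le k}d_{i_a,i_b}$. Time is measured in a model where arithmetic operations, comparisons and evaluation of $d(\cdot,\cdot)^\alpha$ take $O(1)$ time. *)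

theory Defs
  imports "HOL-Analysis.Analysis"
begin

text \<open>Points of R^2 are modelled as real \<times> real; dist on the product is the Euclidean distance.\<close>

definition prec :: "real \<times> real \<Rightarrow> real \<times> real \<Rightarrow> bool" where
  "prec y z \<longleftrightarrow> fst y < fst z \<and> snd y > snd z"

definition dd :: "real \<Rightarrow> (nat \<Rightarrow> real \<times> real) \<Rightarrow> nat \<Rightarrow> nat \<Rightarrow> real" where
  "dd \<alpha> x a b = dist (x a) (x b) powr \<alpha>"

definition CMM :: "real \<Rightarrow> (nat \<Rightarrow> real \<times> real) \<Rightarrow> nat \<Rightarrow> nat \<Rightarrow> real" where
  "CMM \<alpha> x k i = Max ((\<lambda>S. Min {dd \<alpha> x a b | a b. a \<in> S \<and> b \<in> S \<and> a < b})
                       ` {S. S \<subseteq> {1..i} \<and> card S = k})"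

text \<open>Dichotomic search with a step counter (each iteration: O(1) array accesses,
  distance evaluations, comparisons and arithmetic, counted as one step).
  bsearch A D lo hi returns the least j in [lo,hi) with D j \<le> A j (or hi if none),
  together with the number of steps performed.\<close>
function bsearch :: "(nat \<Rightarrow> real) \<Rightarrow> (nat \<Rightarrow> real) \<Rightarrow> nat \<Rightarrow> nat \<Rightarrow> nat \<times> nat" where
  "bsearch A D lo hi =
     (if lo < hi then
        (let m = (lo + hi) div 2 in
         if D m \<le> A m then (case bsearch A D lo m of (r, t) \<Rightarrow> (r, t + 1))
         else (case bsearch A D (m + 1) hi of (r, t) \<Rightarrow> (r, t + 1)))
      else (lo, 1))"
  by pat_completeness auto
termination
  by (relation "Wellfounded.measure (\<lambda>(A, D, lo, hi). hi - lo)") auto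

text \<open>Computes max_{a \<le> j \<le> b} min (A j) (D j) by dichotomy, returning (value, steps).\<close>
definition maxmin_dicho :: "(nat \<Rightarrow> real) \<Rightarrow> (nat \<Rightarrow> real) \<Rightarrow> nat \<Rightarrow> nat \<Rightarrow> real \<times> nat" where
  "maxmin_dicho A D a b =
     (case bsearch A D a (b + 1) of (j0, t) \<Rightarrow>
        (if b < j0 then min (A b) (D b)
         else if j0 = a then min (A a) (D a)
         else max (min (A j0) (D j0)) (min (A (j0 - 1)) (D (j0 - 1))),
         t + 1))"

end

theory Submission
  imports Defs
begin

declare bsearch.simps[simp del]



lemma bsearch_spec:
  assumes "\<forall>u v. lo \<le> u \<longrightarrow> u \<le> v \<longrightarrow> v < hi \<longrightarrow> D u \<le> A u \<longrightarrow> D v \<le> A v" "lo \<le> hi"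
  shows "lo \<le> fst (bsearch A D lo hi) \<and> fst (bsearch A D lo hi) \<le> hi \<and>
    (\<forall>j. lo \<le> j \<longrightarrow> j < fst (bsearch A D lo hi) \<longrightarrow> \<not> D j \<le> A j) \<and>
    (fst (bsearch A D lo hi) < hi \<longrightarrow> D (fst (bsearch A D lo hi)) \<le> A (fst (bsearch A D lo hi)))"
  using assms
proof (induction A D lo hi rule: bsearch.induct)
  case (1 A D lo hi)
  show ?case
  proof (cases "lo < hi")
    case False
    then have "bsearch A D lo hi = (lo, 1)" by (subst bsearch.simps) simp
    then show ?thesis using 1(4) False by simp
  next
    case True
    define m where "m = (lo + hi) div 2"
    have m: "lo \<le> m" "m < hi" using True by (auto simp: m_def)
    show ?thesis
    proof (cases "D m \<le> A m")
      case c: True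
      define r where "r = fst (bsearch A D lo m)"
      have eq: "fst (bsearch A D lo hi) = r"
        using True c unfolding r_def by (subst bsearch.simps) (auto simp: m_def Let_def split: prod.split)
      have mono': "\<forall>u v. lo \<le> u \<longrightarrow> u \<le> v \<longrightarrow> v < m \<longrightarrow> D u \<le> A u \<longrightarrow> D v \<le> A v"
        using 1(3) m by simp
      have IH: "lo \<le> r \<and> r \<le> m \<and> (\<forall>j. lo \<le> j \<longrightarrow> j < r \<longrightarrow> \<not> D j \<le> A j) \<and>
        (r < m \<longrightarrow> D r \<le> A r)"
        unfolding r_def using 1(1)[OF True m_def c mono' m(1)] .
      have "r < hi \<longrightarrow> D r \<le> A r"
        using IH c by (cases "r < m") auto
      then show ?thesis unfolding eq using IH m by simp
    next
      case c: False
      define r where "r = fst (bsearch A D (m+1) hi)"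
      have eq: "fst (bsearch A D lo hi) = r"
        using True c unfolding r_def by (subst bsearch.simps) (auto simp: m_def Let_def split: prod.split)
      have mono': "\<forall>u v. m+1 \<le> u \<longrightarrow> u \<le> v \<longrightarrow> v < hi \<longrightarrow> D u \<le> A u \<longrightarrow> D v \<le> A v"
      proof (intro allI impI)
        fix u v assume "m+1 \<le> u" "u \<le> v" "v < hi" "D u \<le> A u"
        then show "D v \<le> A v" proof -
          have "lo \<le> u" using \<open>m+1 \<le> u\<close> m(1) by linarith
          then show ?thesis using 1(3) \<open>u \<le> v\<close> \<open>v < hi\<close> \<open>D u \<le> A u\<close> by blast
        qed
      qed
      have IH: "m+1 \<le> r \<and> r \<le> hi \<and> (\<forall>j. m+1 \<le> j \<longrightarrow> j < r \<longrightarrow> \<not> D j \<le> A j) \<and>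
        (r < hi \<longrightarrow> D r \<le> A r)"
        unfolding r_def using 1(2)[OF True m_def c mono'] m(2) by simp
      have low: "\<not> D j \<le> A j" if "lo \<le> j" "j \<le> m" for j
      proof
        assume "D j \<le> A j"
        then have "D m \<le> A m" using 1(3) that m(2) by blast
        then show False using c by simp
      qed
      have "\<forall>j. lo \<le> j \<longrightarrow> j < r \<longrightarrow> \<not> D j \<le> A j"
      proof (intro allI impI)
        fix j assume "lo \<le> j" "j < r"
        then show "\<not> D j \<le> A j" using IH low by (cases "j \<le> m") auto
      qed
      then show ?thesis unfolding eq using IH m by simp
    qed
  qed
qed




lemma bsearch_steps:
  "(hi \<le> lo \<longrightarrow> snd (bsearch A D lo hi) = 1) \<and>
   (lo < hi \<longrightarrow> 2 ^ snd (bsearch A D lo hi) \<le> 4 * (hi - lo))"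
proof (induction A D lo hi rule: bsearch.induct)
  case (1 A D lo hi)
  show ?case
  proof (cases "lo < hi")
    case False
    then show ?thesis by (subst bsearch.simps) auto
  next
    case True
    define m where "m = (lo + hi) div 2"
    have m: "lo \<le> m" "m < hi" "2 * (m - lo) \<le> hi - lo" "2 * (hi - (m+1)) \<le> hi - lo"
      using True by (auto simp: m_def)
    show ?thesis
    proof (cases "D m \<le> A m")
      case c: True
      have eq: "snd (bsearch A D lo hi) = Suc (snd (bsearch A D lo m))"
        using True c by (subst bsearch.simps) (auto simp: m_def Let_def split: prod.split)
      note IH = 1(1)[OF True m_def c]
      have "2 ^ snd (bsearch A D lo m) \<le> 2 * (hi - lo)"
      proof (cases "lo < m")
        case True
        then show ?thesis using IH m by linarith
      next
        case False
        then show ?thesis using IH m True by simp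
      qed
      then show ?thesis unfolding eq using True by simp
    next
      case c: False
      have eq: "snd (bsearch A D lo hi) = Suc (snd (bsearch A D (m+1) hi))"
        using True c by (subst bsearch.simps) (auto simp: m_def Let_def split: prod.split)
      note IH = 1(2)[OF True m_def c]
      have "2 ^ snd (bsearch A D (m+1) hi) \<le> 2 * (hi - lo)"
      proof (cases "m+1 < hi")
        case True
        then show ?thesis using IH m by linarith
      next
        case False
        then show ?thesis using IH m True by simp
      qed
      then show ?thesis unfolding eq using True by simp
    qed
  qed
qed




lemma dist_mono_pair:
  fixes p q r :: "real \<times> real"
  assumes "fst p \<le> fst q" "fst q \<le> fst r" "snd p \<ge> snd q" "snd q \<ge> snd r"
  shows "dist q r \<le> dist p r" "dist p q \<le> dist p r"
proof -
  obtain p1 p2 q1 q2 r1 r2 where e: "p = (p1,p2)" "q = (q1,q2)" "r = (r1,r2)"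
    by (metis prod.collapse)
  have a: "(dist q1 r1)^2 \<le> (dist p1 r1)^2" "(dist q2 r2)^2 \<le> (dist p2 r2)^2"
       "(dist p1 q1)^2 \<le> (dist p1 r1)^2" "(dist p2 q2)^2 \<le> (dist p2 r2)^2"
    using assms e by (auto simp: dist_real_def intro!: power_mono)
  show "dist q r \<le> dist p r" "dist p q \<le> dist p r"
    unfolding e dist_Pair_Pair
    by (rule real_sqrt_le_mono, rule add_mono, (rule a)+)+
qed

lemma dd_mono:
  assumes H: "\<forall>a b. 1 \<le> a \<longrightarrow> a < b \<longrightarrow> b \<le> n \<longrightarrow> prec (x a) (x b)" and al: "\<alpha> > 0"
    and "1 \<le> a" "a \<le> b" "b < c" "c \<le> n"
  shows "dd \<alpha> x b c \<le> dd \<alpha> x a c"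
proof (cases "a = b")
  case True then show ?thesis by simp
next
  case False
  then have "prec (x a) (x b)" "prec (x b) (x c)" using H assms by auto
  then have "dist (x b) (x c) \<le> dist (x a) (x c)"
    by (intro dist_mono_pair) (auto simp: prec_def)
  then show ?thesis unfolding dd_def using al by (intro powr_mono2) auto
qed

lemma dd_mono2:
  assumes H: "\<forall>a b. 1 \<le> a \<longrightarrow> a < b \<longrightarrow> b \<le> n \<longrightarrow> prec (x a) (x b)" and al: "\<alpha> > 0"
    and "1 \<le> a" "a < b" "b \<le> c" "c \<le> n"
  shows "dd \<alpha> x a b \<le> dd \<alpha> x a c"
proof (cases "b = c")
  case True then show ?thesis by simp
next
  case False
  then have "prec (x a) (x b)" "prec (x b) (x c)" using H assms by auto
  then have "dist (x a) (x b) \<le> dist (x a) (x c)"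
    by (intro dist_mono_pair) (auto simp: prec_def)
  then show ?thesis unfolding dd_def using al by (intro powr_mono2) auto
qed

definition md :: "real \<Rightarrow> (nat \<Rightarrow> real \<times> real) \<Rightarrow> nat set \<Rightarrow> real" where
  "md \<alpha> x S = Min {dd \<alpha> x a b | a b. a \<in> S \<and> b \<in> S \<and> a < b}"

lemma CMM_md: "CMM \<alpha> x k i = Max (md \<alpha> x ` {S. S \<subseteq> {1..i} \<and> card S = k})"
  unfolding CMM_def md_def by simp

lemma fin_pairs: "finite S \<Longrightarrow> finite {dd \<alpha> x a b | a b. a \<in> S \<and> b \<in> S \<and> a < b}"
proof -
  assume "finite S"
  moreover have "{dd \<alpha> x a b | a b. a \<in> S \<and> b \<in> S \<and> a < b} \<subseteq> (\<lambda>(a,b). dd \<alpha> x a b) ` (S \<times> S)"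
    by auto
  ultimately show ?thesis by (meson finite_SigmaI finite_imageI finite_subset)
qed

lemma md_le: "finite S \<Longrightarrow> a \<in> S \<Longrightarrow> b \<in> S \<Longrightarrow> a < b \<Longrightarrow> md \<alpha> x S \<le> dd \<alpha> x a b"
  unfolding md_def by (rule Min_le) (auto intro: fin_pairs)

lemma le_md:
  assumes "finite S" "a0 \<in> S" "b0 \<in> S" "a0 < b0"
    and "\<And>a b. a \<in> S \<Longrightarrow> b \<in> S \<Longrightarrow> a < b \<Longrightarrow> v \<le> dd \<alpha> x a b"
  shows "v \<le> md \<alpha> x S"
  unfolding md_def using assms by (subst Min_ge_iff) (auto intro: fin_pairs)

lemma pair_ex:
  assumes "finite (S::nat set)" "2 \<le> card S"
  shows "\<exists>a b. a \<in> S \<and> b \<in> S \<and> a < b"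
proof (rule ccontr)
  assume nt: "\<not> (\<exists>a b. a \<in> S \<and> b \<in> S \<and> a < b)"
  have ne: "S \<noteq> {}" using assms by auto
  have "\<forall>a\<in>S. a = Min S"
  proof
    fix a assume a: "a \<in> S"
    then have "Min S \<le> a" using Min_le[OF assms(1)] by blast
    moreover have "\<not> Min S < a" using nt a Min_in[OF assms(1) ne] by blast
    ultimately show "a = Min S" by simp
  qed
  then have "S \<subseteq> {Min S}" by auto
  then have "card S \<le> card {Min S}" by (rule card_mono[rotated]) simp
  then have "card S \<le> 1" by simp
  then show False using assms by simp
qed

lemma sets_fin: "finite {S. S \<subseteq> {1..i::nat} \<and> card S = k}"
  by (rule finite_subset[of _ "Pow {1..i}"]) auto

lemma CMM_ge: "S \<subseteq> {1..i} \<Longrightarrow> card S = k \<Longrightarrow> md \<alpha> x S \<le> CMM \<alpha> x k i"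
  unfolding CMM_md by (rule Max_ge) (auto intro: sets_fin)

lemma CMM_att:
  assumes "k \<le> i"
  shows "\<exists>S. S \<subseteq> {1..i} \<and> card S = k \<and> CMM \<alpha> x k i = md \<alpha> x S"
proof -
  have w: "{1..k} \<in> {S. S \<subseteq> {1..i} \<and> card S = k}" using assms by auto
  have "CMM \<alpha> x k i \<in> md \<alpha> x ` {S. S \<subseteq> {1..i} \<and> card S = k}"
    unfolding CMM_md by (rule Max_in) (use w sets_fin in blast)+
  then show ?thesis by blast
qed

lemma CMM_mono:
  assumes "k \<le> u" "u \<le> v"
  shows "CMM \<alpha> x k u \<le> CMM \<alpha> x k v"
proof -
  obtain S where S: "S \<subseteq> {1..u}" "card S = k" "CMM \<alpha> x k u = md \<alpha> x S"
    using CMM_att[OF assms(1)] by blast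
  have "S \<subseteq> {1..v}" using S(1) assms(2) by auto
  then show ?thesis using CMM_ge[OF _ S(2), of v] S(3) by simp
qed



lemma recursion:
  assumes H: "\<forall>a b. 1 \<le> a \<longrightarrow> a < b \<longrightarrow> b \<le> n \<longrightarrow> prec (x a) (x b)" and al: "\<alpha> > 0"
    and k: "3 \<le> k" "k \<le> i" "i \<le> n"
  shows "CMM \<alpha> x k i = Max ((\<lambda>j. min (CMM \<alpha> x (k - 1) j) (dd \<alpha> x j i)) ` {k - 1..i - 1})"
    (is "_ = Max (?F ` ?J)")
proof (rule antisym)
  have finJ: "finite (?F ` ?J)" by simp
  obtain S where S: "S \<subseteq> {1..i}" "card S = k" "CMM \<alpha> x k i = md \<alpha> x S"
    using CMM_att[OF k(2)] by blast
  have finS: "finite S" using S(1) finite_subset by blast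
  have neS: "S \<noteq> {}" using S(2) k by auto
  define s where "s = Max S"
  have s: "s \<in> S" "\<And>a. a \<in> S \<Longrightarrow> a \<le> s" using finS neS by (auto simp: s_def)
  define S' where "S' = S - {s}"
  have finS': "finite S'" using finS by (simp add: S'_def)
  have cS': "card S' = k - 1" using S(2) s(1) finS by (simp add: S'_def)
  have neS': "S' \<noteq> {}" using cS' k by auto
  define j where "j = Max S'"
  have j: "j \<in> S'" "\<And>a. a \<in> S' \<Longrightarrow> a \<le> j" using finS' neS' by (auto simp: j_def)
  have js: "j < s" using j(1) s by (auto simp: S'_def le_neq_implies_less)
  have si: "s \<le> i" using s(1) S(1) by auto
  have j1: "1 \<le> j" using j(1) S(1) by (auto simp: S'_def)
  have S'sub: "S' \<subseteq> {1..j}"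
  proof
    fix a assume a: "a \<in> S'"
    then have "a \<in> S" by (simp add: S'_def)
    then have "1 \<le> a" using S(1) by auto
    then show "a \<in> {1..j}" using j(2)[OF a] by simp
  qed
  have "card S' \<le> card {1..j}" by (rule card_mono[OF _ S'sub]) simp
  then have jk: "k - 1 \<le> j" using cS' by simp
  have jJ: "j \<in> ?J" using jk js si by auto
  obtain a0 b0 where ab0: "a0 \<in> S'" "b0 \<in> S'" "a0 < b0"
  proof -
    have "2 \<le> card S'" using cS' k by simp
    then show ?thesis using pair_ex[OF finS'] that by blast
  qed
  have "md \<alpha> x S \<le> md \<alpha> x S'"
    by (rule le_md[OF finS' ab0]) (rule md_le[OF finS], auto simp: S'_def)
  also have "\<dots> \<le> CMM \<alpha> x (k - 1) j" by (rule CMM_ge[OF S'sub cS'])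
  finally have 1: "md \<alpha> x S \<le> CMM \<alpha> x (k - 1) j" .
  have "md \<alpha> x S \<le> dd \<alpha> x j s"
    by (rule md_le[OF finS]) (use j(1) s(1) js in \<open>auto simp: S'_def\<close>)
  also have "\<dots> \<le> dd \<alpha> x j i" by (rule dd_mono2[OF H al j1 js si k(3)])
  finally have 2: "md \<alpha> x S \<le> dd \<alpha> x j i" .
  have "md \<alpha> x S \<le> ?F j" using 1 2 by simp
  also have "\<dots> \<le> Max (?F ` ?J)" by (rule Max_ge[OF finJ]) (use jJ in blast)
  finally show "CMM \<alpha> x k i \<le> Max (?F ` ?J)" using S(3) by simp
next
  have neJ: "?J \<noteq> {}" using k by auto
  have "Max (?F ` ?J) \<in> ?F ` ?J" by (rule Max_in) (use neJ in auto)
  then obtain j where jJ: "j \<in> ?J" and eqj: "Max (?F ` ?J) = ?F j" by blast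
  have jk: "k - 1 \<le> j" "j < i" "1 \<le> j" using jJ k by auto
  obtain S' where S': "S' \<subseteq> {1..j}" "card S' = k - 1" "CMM \<alpha> x (k - 1) j = md \<alpha> x S'"
    using CMM_att[OF jk(1)] by blast
  have finS': "finite S'" using S'(1) finite_subset by blast
  have iS': "i \<notin> S'" using S'(1) jk by auto
  define S where "S = insert i S'"
  have finS: "finite S" using finS' by (simp add: S_def)
  have cS: "card S = k" using S'(2) iS' finS' k by (simp add: S_def)
  have Ssub: "S \<subseteq> {1..i}" using S'(1) jk k by (auto simp: S_def)
  obtain a0 b0 where ab0: "a0 \<in> S'" "b0 \<in> S'" "a0 < b0"
  proof -
    have "2 \<le> card S'" using S'(2) k by simp
    then show ?thesis using pair_ex[OF finS'] that by blast
  qed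
  have "?F j \<le> md \<alpha> x S"
  proof (rule le_md[OF finS])
    show "a0 \<in> S" "b0 \<in> S" "a0 < b0" using ab0 by (auto simp: S_def)
  next
    fix a b assume ab: "a \<in> S" "b \<in> S" "a < b"
    show "?F j \<le> dd \<alpha> x a b"
    proof (cases "b = i")
      case True
      then have a: "a \<in> S'" "a \<le> j" "1 \<le> a" using ab S'(1) by (auto simp: S_def)
      have "dd \<alpha> x j i \<le> dd \<alpha> x a i" by (rule dd_mono[OF H al a(3) a(2) jk(2) k(3)])
      then show ?thesis using True by simp
    next
      case False
      then have b: "b \<in> S'" using ab by (auto simp: S_def)
      then have "b < i" using S'(1) jk by auto
      then have a: "a \<in> S'" using ab by (auto simp: S_def)
      have "md \<alpha> x S' \<le> dd \<alpha> x a b" by (rule md_le[OF finS' a b ab(3)])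
      then show ?thesis using S'(3) by simp
    qed
  qed
  also have "\<dots> \<le> CMM \<alpha> x k i" by (rule CMM_ge[OF Ssub cS])
  finally show "Max (?F ` ?J) \<le> CMM \<alpha> x k i" using eqj by simp
qed

lemma dicho_correct:
  assumes ab: "a \<le> b"
    and mA: "\<And>u v. a \<le> u \<Longrightarrow> u \<le> v \<Longrightarrow> v \<le> b \<Longrightarrow> A u \<le> A v"
    and mD: "\<And>u v. a \<le> u \<Longrightarrow> u \<le> v \<Longrightarrow> v \<le> b \<Longrightarrow> D v \<le> D u"
  shows "fst (maxmin_dicho A D a b) = Max ((\<lambda>j. min (A j) (D j)) ` {a..b})"
    (is "_ = Max (?f ` _)")
proof -
  define j0 where "j0 = fst (bsearch A D a (b + 1))"
  have mono: "\<forall>u v. a \<le> u \<longrightarrow> u \<le> v \<longrightarrow> v < b + 1 \<longrightarrow> D u \<le> A u \<longrightarrow> D v \<le> A v"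
  proof (intro allI impI)
    fix u v assume h: "a \<le> u" "u \<le> v" "v < b + 1" "D u \<le> A u"
    have "D v \<le> D u" using h by (intro mD) auto
    moreover have "A u \<le> A v" using h by (intro mA) auto
    ultimately show "D v \<le> A v" using h(4) by linarith
  qed
  have sp: "a \<le> j0 \<and> j0 \<le> b + 1 \<and> (\<forall>j. a \<le> j \<longrightarrow> j < j0 \<longrightarrow> \<not> D j \<le> A j) \<and>
    (j0 < b + 1 \<longrightarrow> D j0 \<le> A j0)"
    unfolding j0_def by (rule bsearch_spec[OF mono]) (use ab in simp)
  have res: "fst (maxmin_dicho A D a b) =
     (if b < j0 then ?f b else if j0 = a then ?f a else max (?f j0) (?f (j0 - 1)))"
    unfolding maxmin_dicho_def j0_def by (simp split: prod.split)
  have fin: "finite (?f ` {a..b})" by simp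
  have below: "?f j = A j" "A j \<le> A (j0 - 1)" if "a \<le> j" "j < j0" "j0 \<le> b + 1" for j
  proof -
    have "\<not> D j \<le> A j" using sp that by blast
    then show "?f j = A j" by (simp add: min_def)
    show "A j \<le> A (j0 - 1)" using that by (intro mA) auto
  qed
  have above: "?f j = D j" "D j \<le> D j0" if "j0 \<le> j" "j \<le> b" for j
  proof -
    have "j0 < b + 1" using that by simp
    then have "D j0 \<le> A j0" using sp by blast
    moreover have "a \<le> j0" using sp by blast
    ultimately have "D j \<le> A j" using mono[rule_format, of j0 j] that by simp
    then show "?f j = D j" by (simp add: min_def)
    show "D j \<le> D j0" using that sp by (intro mD) auto
  qed
  show ?thesis
  proof (cases "b < j0")
    case True
    then have j0b: "j0 = b + 1" using sp by simp
    have "Max (?f ` {a..b}) = ?f b"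
    proof (rule Max_eqI[OF fin])
      fix y assume "y \<in> ?f ` {a..b}"
      then obtain j where j: "a \<le> j" "j \<le> b" "y = ?f j" by auto
      have "j < j0" "b < j0" "j0 \<le> b + 1" "j0 - 1 = b" using j0b j by simp_all
      then have "y = A j" "A j \<le> A b" "?f b = A b"
        using below(1)[of j] below(2)[of j] below(1)[of b] j(1,3) ab by simp_all
      then show "y \<le> ?f b" by simp
    next
      show "?f b \<in> ?f ` {a..b}" using ab by auto
    qed
    then show ?thesis using res True by simp
  next
    case False
    note F = False
    show ?thesis
    proof (cases "j0 = a")
      case True
      have "Max (?f ` {a..b}) = ?f a"
      proof (rule Max_eqI[OF fin])
        fix y assume "y \<in> ?f ` {a..b}"
        then obtain j where j: "a \<le> j" "j \<le> b" "y = ?f j" by auto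
        have "j0 \<le> j" "j0 \<le> a" using True j by simp_all
        then have "y = D j" "D j \<le> D a" "?f a = D a"
          using above(1)[of j] above(2)[of j] above(1)[of a] j(2,3) ab True by simp_all
        then show "y \<le> ?f a" by simp
      next
        show "?f a \<in> ?f ` {a..b}" using ab by auto
      qed
      then show ?thesis using res True F by simp
    next
      case False
      have j0: "a < j0" "j0 \<le> b" using sp False F by auto
      have "Max (?f ` {a..b}) = max (?f j0) (?f (j0 - 1))"
      proof (rule Max_eqI[OF fin])
        fix y assume "y \<in> ?f ` {a..b}"
        then obtain j where j: "a \<le> j" "j \<le> b" "y = ?f j" by auto
        show "y \<le> max (?f j0) (?f (j0 - 1))"
        proof (cases "j < j0")
          case True
          have "j0 \<le> b + 1" using j0 by simp
          then have "y = A j" "A j \<le> A (j0 - 1)" "?f (j0 - 1) = A (j0 - 1)"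
            using below(1)[of j] below(2)[of j] below(1)[of "j0 - 1"] j(1,3) True j0 by simp_all
          then show ?thesis by simp
        next
          case False
          then have "j0 \<le> j" by simp
          then have "y = D j" "D j \<le> D j0" "?f j0 = D j0"
            using above(1)[of j] above(2)[of j] above(1)[of j0] j(2,3) j0 by simp_all
          then show ?thesis by simp
        qed
      next
        have "j0 \<in> {a..b}" "j0 - 1 \<in> {a..b}" using j0 by auto
        then have "?f j0 \<in> ?f ` {a..b}" "?f (j0 - 1) \<in> ?f ` {a..b}" by blast+
        then show "max (?f j0) (?f (j0 - 1)) \<in> ?f ` {a..b}"
          by (simp add: max_def)
      qed
      then show ?thesis using res False F by simp
    qed
  qed
qed



lemma log_bound:
  fixes t N :: nat
  assumes "1 \<le> N" "2 ^ t \<le> 4 * N"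
  shows "real (t + 1) \<le> 3 * (1 + log 2 (real N))"
proof -
  have N: "real N \<ge> 1" using assms by simp
  have "(2::real) ^ t \<le> 4 * real N"
  proof -
    have "real (2 ^ t) \<le> real (4 * N)" using assms(2) by (simp only: of_nat_le_iff)
    then show ?thesis by simp
  qed
  then have "log 2 ((2::real) ^ t) \<le> log 2 (4 * real N)"
    using N by (subst log_le_cancel_iff) auto
  also have "log 2 (4 * real N) = log 2 4 + log 2 (real N)"
    using N by (subst log_mult) auto
  also have "log 2 (4::real) = 2"
  proof -
    have "log 2 ((2::real) ^ 2) = 2" by (subst log_pow_cancel) auto
    then show ?thesis by simp
  qed
  finally have "real t \<le> 2 + log 2 (real N)" by (simp add: log_nat_power)
  moreover have "log 2 (real N) \<ge> 0" using N by simp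
  ultimately show ?thesis by simp
qed

theorem proposition10:
  "\<exists>K::real. \<forall>(\<alpha>::real) (x::nat \<Rightarrow> real \<times> real) (n::nat) (p::nat) (k::nat) (i::nat)
      (A::nat \<Rightarrow> real).
     \<alpha> > 0 \<longrightarrow>
     (\<forall>a b. 1 \<le> a \<longrightarrow> a < b \<longrightarrow> b \<le> n \<longrightarrow> prec (x a) (x b)) \<longrightarrow>
     3 \<le> p \<longrightarrow> 3 \<le> k \<longrightarrow> k \<le> p \<longrightarrow> k \<le> i \<longrightarrow> i \<le> n \<longrightarrow>
     (\<forall>j \<in> {k - 1..i - 1}. A j = CMM \<alpha> x (k - 1) j) \<longrightarrow>
     CMM \<alpha> x k i = Max ((\<lambda>j. min (CMM \<alpha> x (k - 1) j) (dd \<alpha> x j i)) ` {k - 1..i - 1}) \<and>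
     fst (maxmin_dicho A (\<lambda>j. dd \<alpha> x j i) (k - 1) (i - 1)) = CMM \<alpha> x k i \<and>
     real (snd (maxmin_dicho A (\<lambda>j. dd \<alpha> x j i) (k - 1) (i - 1)))
       \<le> K * (1 + log 2 (real (i + 1 - k)))"
proof (rule exI[of _ 3], intro allI impI)
  fix \<alpha> :: real and x :: "nat \<Rightarrow> real \<times> real" and n p k i :: nat and A :: "nat \<Rightarrow> real"
  assume al: "\<alpha> > 0" and H: "\<forall>a b. 1 \<le> a \<longrightarrow> a < b \<longrightarrow> b \<le> n \<longrightarrow> prec (x a) (x b)"
    and p3: "3 \<le> p" and k3: "3 \<le> k" and kp: "k \<le> p" and ki: "k \<le> i" and iN: "i \<le> n"
    and hA: "\<forall>j \<in> {k - 1..i - 1}. A j = CMM \<alpha> x (k - 1) j"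
  have rec: "CMM \<alpha> x k i = Max ((\<lambda>j. min (CMM \<alpha> x (k - 1) j) (dd \<alpha> x j i)) ` {k - 1..i - 1})"
    by (rule recursion[OF H al k3 ki iN])
  have mA: "A u \<le> A v" if "k - 1 \<le> u" "u \<le> v" "v \<le> i - 1" for u v
  proof -
    have "A u = CMM \<alpha> x (k - 1) u" "A v = CMM \<alpha> x (k - 1) v" using hA that by auto
    then show ?thesis using CMM_mono[OF that(1,2)] by simp
  qed
  have mD: "dd \<alpha> x v i \<le> dd \<alpha> x u i" if "k - 1 \<le> u" "u \<le> v" "v \<le> i - 1" for u v
  proof -
    have "1 \<le> u" "v < i" using that k3 ki by auto
    then show ?thesis using dd_mono[OF H al _ that(2) _ iN] by simp
  qed
  have dc: "fst (maxmin_dicho A (\<lambda>j. dd \<alpha> x j i) (k - 1) (i - 1)) =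
     Max ((\<lambda>j. min (A j) (dd \<alpha> x j i)) ` {k - 1..i - 1})"
    by (rule dicho_correct) (use ki mA mD in auto)
  have "(\<lambda>j. min (A j) (dd \<alpha> x j i)) ` {k - 1..i - 1} =
        (\<lambda>j. min (CMM \<alpha> x (k - 1) j) (dd \<alpha> x j i)) ` {k - 1..i - 1}"
    by (rule image_cong) (use hA in auto)
  then have fstres: "fst (maxmin_dicho A (\<lambda>j. dd \<alpha> x j i) (k - 1) (i - 1)) = CMM \<alpha> x k i"
    using dc rec by simp
  define t where "t = snd (bsearch A (\<lambda>j. dd \<alpha> x j i) (k - 1) (i - 1 + 1))"
  have sndres: "snd (maxmin_dicho A (\<lambda>j. dd \<alpha> x j i) (k - 1) (i - 1)) = t + 1"
    unfolding maxmin_dicho_def t_def by (simp split: prod.split)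
  have ii: "i - 1 + 1 = i" "i - (k - 1) = i + 1 - k" using k3 ki by auto
  have "2 ^ t \<le> 4 * (i + 1 - k)"
    using bsearch_steps[of "i - 1 + 1" "k - 1" A "\<lambda>j. dd \<alpha> x j i"] ii k3 ki
    unfolding t_def by simp
  then have "real (t + 1) \<le> 3 * (1 + log 2 (real (i + 1 - k)))"
    by (intro log_bound) (use ki in auto)
  then show "CMM \<alpha> x k i = Max ((\<lambda>j. min (CMM \<alpha> x (k - 1) j) (dd \<alpha> x j i)) ` {k - 1..i - 1}) \<and>
     fst (maxmin_dicho A (\<lambda>j. dd \<alpha> x j i) (k - 1) (i - 1)) = CMM \<alpha> x k i \<and>
     real (snd (maxmin_dicho A (\<lambda>j. dd \<alpha> x j i) (k - 1) (i - 1)))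
       \<le> 3 * (1 + log 2 (real (i + 1 - k)))"
    using rec fstres sndres by simp
qed

end
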